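(* Let $(X,d)$ be a complete cone metric space (in the setting described in the context). Let $L:E\to E$ be a positive linear operator, $\delta\in\mathcal{K}_+(E)$, and let $T:X\to B(X)$ be a $(\delta,L)$-weak contraction, i.e. $H(Tx,Ty)\preceq\delta\,d(x,y)+L\,d(y,Tx)$ for all $x,y\in X$, which satisfies condition (S). Suppose that the function $\varphi_T(x)=d(x,Tx)$ belongs to $\mathcal{LS}(X)$. Then there exists $x^*\in X$ with $x^*\in Tx^*$.
   Context: Let $E$ be a real topological vector space with zero element $\theta$, and $P\subseteq E$ a cone, i.e. a nonempty closed subset with $P\cap(-P)=\{\theta\}$ and $\lambda P+P\subseteq P$ for all $\lambda\ge 0$. Write $x\preceq y$ iff $y-x\in P$; $x\ll y$ iff $y-x\in\mathrm{int}(P)$. Standing assumptions: $E$ with this order is a Riesz space (every pair has an infimum) and is $\sigma$-order complete (every decreasing sequence bounded from below has an infimum). A cone metric space is a pair $(X,d)$ with $X$ nonempty and $d:X\times X\to E$ such that $d(x,y)=\theta$ iff $x=y$, and $d(x,y)\preceq d(x,z)+d(y,z)$ for all $x,y,z$. A sequence $(x_n)$ converges to $x$ iff for every $\epsilon\gg\theta$ there is $N$ with $d(x_n,x)\ll\epsilon$ for $n\ge N$; it is Cauchy iff for every $\epsilon\gg\theta$ there is $N$ with $d(x_m,x_n)\ll\epsilon$ for $m,n\ge N$; $X$ is complete iff every Cauchy sequence converges. A set $F\subseteq X$ is closed iff limits of convergent sequences in $F$ lie in $F$. $\varphi:X\to E$ is lower semicontinuous iff $\{x:\varphi(x)\preceq\alpha\}$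 is closed for every $\alpha\in E$, and bounded below iff some $b\in E$ satisfies $b\preceq\varphi(x)$ for all $x$; $\mathcal{LS}(X)$ is the set of lower semicontinuous, bounded below functions $X\to E$. $B(X)$ is the family of nonempty bounded subsets of $X$. For $x\in X$ and nonempty $A\subseteq X$, $d(x,A)=\inf_{y\in A}d(x,y)$, and for $A,B\in B(X)$, $H(A,B)=\sup\{\sup_{x\in A}d(x,B),\sup_{y\in B}d(y,A)\}$ (infima and suprema in the order $\preceq$, assumed to exist). A linear operator $L:E\to E$ is positive if $LP\subseteq P$. $\mathcal{K}_+(E)$ is the set of all positive, injective, continuous linear operators $\delta:E\to E$ for which there exists $0\le t<1$ with $\theta\preceq\delta x\preceq tx$ for all $x\in P$. A selector of $T$ is a function $f:X\to X$ with $f(x)\in Tx$ for all $x$. $T$ satisfies condition (S) if for every $\epsilon>0$ there is a selector $f_\epsilon$ of $T$ with $d(x,f_\epsilon(x))\preceq(1+\epsilon)d(x,Tx)$ for all $x\in X$. *)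

theory Defs
  imports "HOL-Analysis.Analysis"
begin

definition cle :: "'e::real_vector set \<Rightarrow> 'e \<Rightarrow> 'e \<Rightarrow> bool" where
  "cle P x y \<longleftrightarrow> y - x \<in> P"

definition cll :: "'e::{real_vector,topological_space} set \<Rightarrow> 'e \<Rightarrow> 'e \<Rightarrow> bool" where
  "cll P x y \<longleftrightarrow> y - x \<in> interior P"

definition tvs :: "'e::{real_vector,topological_space} itself \<Rightarrow> bool" where
  "tvs _ \<longleftrightarrow> continuous_on UNIV (\<lambda>p::'e \<times> 'e. fst p + snd p)
     \<and> continuous_on UNIV (\<lambda>p::real \<times> 'e. fst p *\<^sub>R snd p)"

definition is_cone :: "'e::{real_vector,topological_space} set \<Rightarrow> bool" where
  "is_cone P \<longleftrightarrow> P \<noteq> {} \<and> closed P \<and> P \<inter> uminus ` P = {0}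
     \<and> (\<forall>l::real. l \<ge> 0 \<longrightarrow> (\<forall>x\<in>P. \<forall>y\<in>P. l *\<^sub>R x + y \<in> P))"

definition is_glb :: "'e::real_vector set \<Rightarrow> 'e set \<Rightarrow> 'e \<Rightarrow> bool" where
  "is_glb P S z \<longleftrightarrow> (\<forall>s\<in>S. cle P z s) \<and> (\<forall>w. (\<forall>s\<in>S. cle P w s) \<longrightarrow> cle P w z)"

definition is_lub :: "'e::real_vector set \<Rightarrow> 'e set \<Rightarrow> 'e \<Rightarrow> bool" where
  "is_lub P S z \<longleftrightarrow> (\<forall>s\<in>S. cle P s z) \<and> (\<forall>w. (\<forall>s\<in>S. cle P s w) \<longrightarrow> cle P z w)"

definition cinf :: "'e::real_vector set \<Rightarrow> 'e set \<Rightarrow> 'e" where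
  "cinf P S = (THE z. is_glb P S z)"

definition csup :: "'e::real_vector set \<Rightarrow> 'e set \<Rightarrow> 'e" where
  "csup P S = (THE z. is_lub P S z)"

definition riesz :: "'e::real_vector set \<Rightarrow> bool" where
  "riesz P \<longleftrightarrow> (\<forall>x y. \<exists>z. is_glb P {x, y} z)"

definition sigma_order_complete :: "'e::real_vector set \<Rightarrow> bool" where
  "sigma_order_complete P \<longleftrightarrow>
     (\<forall>u::nat \<Rightarrow> 'e. (\<forall>n. cle P (u (Suc n)) (u n)) \<and> (\<exists>b. \<forall>n. cle P b (u n))
        \<longrightarrow> (\<exists>z. is_glb P (range u) z))"

definition cone_metric :: "'e::real_vector set \<Rightarrow> ('a \<Rightarrow> 'a \<Rightarrow> 'e) \<Rightarrow> bool" where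
  "cone_metric P d \<longleftrightarrow> (\<forall>x y. d x y = 0 \<longleftrightarrow> x = y)
     \<and> (\<forall>x y z. cle P (d x y) (d x z + d y z))"

definition cconv :: "'e::{real_vector,topological_space} set \<Rightarrow> ('a \<Rightarrow> 'a \<Rightarrow> 'e)
    \<Rightarrow> (nat \<Rightarrow> 'a) \<Rightarrow> 'a \<Rightarrow> bool" where
  "cconv P d s x \<longleftrightarrow> (\<forall>\<epsilon>. \<epsilon> \<in> interior P \<longrightarrow> (\<exists>N. \<forall>n\<ge>N. cll P (d (s n) x) \<epsilon>))"

definition ccauchy :: "'e::{real_vector,topological_space} set \<Rightarrow> ('a \<Rightarrow> 'a \<Rightarrow> 'e)
    \<Rightarrow> (nat \<Rightarrow> 'a) \<Rightarrow> bool" where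
  "ccauchy P d s \<longleftrightarrow> (\<forall>\<epsilon>. \<epsilon> \<in> interior P \<longrightarrow> (\<exists>N. \<forall>m\<ge>N. \<forall>n\<ge>N. cll P (d (s m) (s n)) \<epsilon>))"

definition ccomplete :: "'e::{real_vector,topological_space} set \<Rightarrow> ('a \<Rightarrow> 'a \<Rightarrow> 'e) \<Rightarrow> bool" where
  "ccomplete P d \<longleftrightarrow> (\<forall>s. ccauchy P d s \<longrightarrow> (\<exists>x. cconv P d s x))"

definition cclosed :: "'e::{real_vector,topological_space} set \<Rightarrow> ('a \<Rightarrow> 'a \<Rightarrow> 'e) \<Rightarrow> 'a set \<Rightarrow> bool" where
  "cclosed P d F \<longleftrightarrow> (\<forall>s x. (\<forall>n. s n \<in> F) \<and> cconv P d s x \<longrightarrow> x \<in> F)"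

definition lsc :: "'e::{real_vector,topological_space} set \<Rightarrow> ('a \<Rightarrow> 'a \<Rightarrow> 'e) \<Rightarrow> ('a \<Rightarrow> 'e) \<Rightarrow> bool" where
  "lsc P d \<phi> \<longleftrightarrow> (\<forall>\<alpha>. cclosed P d {x. cle P (\<phi> x) \<alpha>})"

definition LS :: "'e::{real_vector,topological_space} set \<Rightarrow> ('a \<Rightarrow> 'a \<Rightarrow> 'e) \<Rightarrow> ('a \<Rightarrow> 'e) set" where
  "LS P d = {\<phi>. lsc P d \<phi> \<and> (\<exists>b. \<forall>x. cle P b (\<phi> x))}"

definition Bset :: "'e::real_vector set \<Rightarrow> ('a \<Rightarrow> 'a \<Rightarrow> 'e) \<Rightarrow> 'a set set" where
  "Bset P d = {A. A \<noteq> {} \<and> (\<exists>c. \<forall>x\<in>A. \<forall>y\<in>A. cle P (d x y) c)}"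

definition dist_set :: "'e::real_vector set \<Rightarrow> ('a \<Rightarrow> 'a \<Rightarrow> 'e) \<Rightarrow> 'a \<Rightarrow> 'a set \<Rightarrow> 'e" where
  "dist_set P d x A = cinf P ((\<lambda>y. d x y) ` A)"

definition hausdorff :: "'e::real_vector set \<Rightarrow> ('a \<Rightarrow> 'a \<Rightarrow> 'e) \<Rightarrow> 'a set \<Rightarrow> 'a set \<Rightarrow> 'e" where
  "hausdorff P d A B = csup P {csup P ((\<lambda>x. dist_set P d x B) ` A),
                               csup P ((\<lambda>y. dist_set P d y A) ` B)}"

text \<open>The infima/suprema in H(A,B) are assumed to exist.\<close>
definition hausdorff_exists :: "'e::real_vector set \<Rightarrow> ('a \<Rightarrow> 'a \<Rightarrow> 'e) \<Rightarrow> 'a set \<Rightarrow> 'a set \<Rightarrow> bool" where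
  "hausdorff_exists P d A B \<longleftrightarrow>
     (\<exists>z. is_lub P ((\<lambda>x. dist_set P d x B) ` A) z)
   \<and> (\<exists>z. is_lub P ((\<lambda>y. dist_set P d y A) ` B) z)
   \<and> (\<exists>z. is_lub P {csup P ((\<lambda>x. dist_set P d x B) ` A), csup P ((\<lambda>y. dist_set P d y A) ` B)} z)"

definition positive_op :: "'e::real_vector set \<Rightarrow> ('e \<Rightarrow> 'e) \<Rightarrow> bool" where
  "positive_op P L \<longleftrightarrow> L ` P \<subseteq> P"

definition K_plus :: "'e::{real_vector,topological_space} set \<Rightarrow> ('e \<Rightarrow> 'e) set" where
  "K_plus P = {\<delta>. linear \<delta> \<and> positive_op P \<delta> \<and> inj \<delta> \<and> continuous_on UNIV \<delta>
     \<and> (\<exists>t::real. 0 \<le> t \<and> t < 1 \<and> (\<forall>x\<in>P. cle P 0 (\<delta> x) \<and> cle P (\<delta> x) (t *\<^sub>R x)))}"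

definition condition_S :: "'e::real_vector set \<Rightarrow> ('a \<Rightarrow> 'a \<Rightarrow> 'e) \<Rightarrow> ('a \<Rightarrow> 'a set) \<Rightarrow> bool" where
  "condition_S P d T \<longleftrightarrow> (\<forall>\<epsilon>::real. \<epsilon> > 0 \<longrightarrow>
     (\<exists>f. (\<forall>x. f x \<in> T x) \<and> (\<forall>x. cle P (d x (f x)) ((1 + \<epsilon>) *\<^sub>R dist_set P d x (T x)))))"

end

theory Submission
  imports Defs
begin

lemma cone_0: "is_cone P \<Longrightarrow> 0 \<in> P"
  unfolding is_cone_def by blast

lemma cone_add: "is_cone P \<Longrightarrow> x \<in> P \<Longrightarrow> y \<in> P \<Longrightarrow> x + y \<in> P"
  unfolding is_cone_def by (metis order_refl scaleR_one zero_le_one)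

lemma cone_scale: "is_cone P \<Longrightarrow> x \<in> P \<Longrightarrow> r \<ge> 0 \<Longrightarrow> r *\<^sub>R x \<in> P"
  using cone_0[of P] unfolding is_cone_def by (metis add.right_neutral)

lemma cone_antisym: "is_cone P \<Longrightarrow> x \<in> P \<Longrightarrow> - x \<in> P \<Longrightarrow> x = 0"
proof -
  assume c: "is_cone P" and a: "x \<in> P" "- x \<in> P"
  have "x \<in> uminus ` P" using a(2) by (metis image_eqI minus_minus)
  with a(1) c show ?thesis unfolding is_cone_def by blast
qed

lemma cle_refl: "is_cone P \<Longrightarrow> cle P x x"
  unfolding cle_def using cone_0 by simp

lemma cle_trans: "is_cone P \<Longrightarrow> cle P x y \<Longrightarrow> cle P y z \<Longrightarrow> cle P x z"
  unfolding cle_def using cone_add[of P "z - y" "y - x"] by simp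

lemma cle_antisym: "is_cone P \<Longrightarrow> cle P x y \<Longrightarrow> cle P y x \<Longrightarrow> x = y"
  unfolding cle_def using cone_antisym[of P "y - x"] by simp

lemma cle_add: "is_cone P \<Longrightarrow> cle P a b \<Longrightarrow> cle P c e \<Longrightarrow> cle P (a + c) (b + e)"
  unfolding cle_def using cone_add[of P "b - a" "e - c"] by (simp add: algebra_simps)

lemma cle_scale: "is_cone P \<Longrightarrow> r \<ge> 0 \<Longrightarrow> cle P a b \<Longrightarrow> cle P (r *\<^sub>R a) (r *\<^sub>R b)"
  unfolding cle_def using cone_scale[of P "b - a" r] by (simp add: scaleR_diff_right)

lemma cle_scalar: "is_cone P \<Longrightarrow> c \<in> P \<Longrightarrow> r \<le> r' \<Longrightarrow> cle P (r *\<^sub>R c) (r' *\<^sub>R c)"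
  unfolding cle_def using cone_scale[of P c "r' - r"] by (simp add: scaleR_diff_left)

lemma cle_0: "cle P 0 x \<longleftrightarrow> x \<in> P"
  unfolding cle_def by simp

lemma pos_mono: "linear L \<Longrightarrow> positive_op P L \<Longrightarrow> cle P a b \<Longrightarrow> cle P (L a) (L b)"
  unfolding cle_def positive_op_def by (metis image_subset_iff linear_diff)

lemma glb_unique: "is_cone P \<Longrightarrow> is_glb P S z \<Longrightarrow> is_glb P S z' \<Longrightarrow> z = z'"
  unfolding is_glb_def using cle_antisym by blast

lemma lub_unique: "is_cone P \<Longrightarrow> is_lub P S z \<Longrightarrow> is_lub P S z' \<Longrightarrow> z = z'"
  unfolding is_lub_def using cle_antisym by blast

lemma cinf_eq: "is_cone P \<Longrightarrow> is_glb P S z \<Longrightarrow> cinf P S = z"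
  unfolding cinf_def using glb_unique by blast

lemma csup_eq: "is_cone P \<Longrightarrow> is_lub P S z \<Longrightarrow> csup P S = z"
  unfolding csup_def using lub_unique by blast

lemma tvs_add: "tvs TYPE('e::{real_vector,topological_space}) \<Longrightarrow> continuous_on UNIV (f::'b::topological_space \<Rightarrow> 'e)
   \<Longrightarrow> continuous_on UNIV g \<Longrightarrow> continuous_on UNIV (\<lambda>x. f x + g x)"
  unfolding tvs_def
  by (rule continuous_on_compose2[where f="\<lambda>x. (f x, g x)" and g="\<lambda>p::'e\<times>'e. fst p + snd p", simplified])
     (auto intro: continuous_on_Pair)

lemma tvs_scale: "tvs TYPE('e::{real_vector,topological_space}) \<Longrightarrow> continuous_on UNIV (f::'b::topological_space \<Rightarrow> real)
   \<Longrightarrow> continuous_on UNIV (g::'b \<Rightarrow> 'e) \<Longrightarrow> continuous_on UNIV (\<lambda>x. f x *\<^sub>R g x)"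
  unfolding tvs_def
  by (rule continuous_on_compose2[where f="\<lambda>x. (f x, g x)" and g="\<lambda>p::real\<times>'e. fst p *\<^sub>R snd p", simplified])
     (auto intro: continuous_on_Pair)

lemma small:
  fixes U :: "'e::{real_vector,topological_space} set"
  assumes "tvs TYPE('e)" "open U" "a \<in> U"
  shows "\<exists>\<eta>>0. \<forall>r. \<bar>r\<bar> < \<eta> \<longrightarrow> a + r *\<^sub>R c \<in> U"
proof -
  have "continuous_on UNIV (\<lambda>r::real. a + r *\<^sub>R c)"
    by (intro tvs_add tvs_scale assms(1) continuous_on_const continuous_on_id)
  then have "open ((\<lambda>r::real. a + r *\<^sub>R c) -` U)"
    using assms(2) continuous_on_open_vimage[of UNIV] by auto
  moreover have "0 \<in> (\<lambda>r::real. a + r *\<^sub>R c) -` U" using assms(3) by simp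
  ultimately obtain \<eta> where "\<eta> > 0" "\<forall>r. dist r 0 < \<eta> \<longrightarrow> r \<in> (\<lambda>r::real. a + r *\<^sub>R c) -` U"
    unfolding open_dist by blast
  then show ?thesis by auto
qed

lemma interior_add:
  fixes P :: "'e::{real_vector,topological_space} set"
  assumes "tvs TYPE('e)" "is_cone P" "a \<in> interior P" "b \<in> P"
  shows "a + b \<in> interior P"
proof -
  define V where "V = (\<lambda>y. y + (- b)) -` interior P"
  have "continuous_on UNIV (\<lambda>y::'e. y + (- b))"
    by (intro tvs_add assms(1) continuous_on_const continuous_on_id)
  then have "open V" unfolding V_def
    using continuous_on_open_vimage[of UNIV] by auto
  moreover have "a + b \<in> V" unfolding V_def using assms(3) by simp
  moreover have "V \<subseteq> P"
  proof
    fix y assume "y \<in> V"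
    then have "y - b \<in> P" unfolding V_def using interior_subset by auto
    then show "y \<in> P" using cone_add[OF assms(2) _ assms(4)] by force
  qed
  ultimately show ?thesis by (meson interiorI)
qed

theorem theorem4:
  fixes P :: "'e::{real_vector,topological_space} set"
    and d :: "'a \<Rightarrow> 'a \<Rightarrow> 'e"
    and T :: "'a \<Rightarrow> 'a set"
    and L \<delta> :: "'e \<Rightarrow> 'e"
  assumes "tvs TYPE('e)"
    and "is_cone P"
    and "riesz P"
    and "sigma_order_complete P"
    and "cone_metric P d"
    and "ccomplete P d"
    and "linear L" and "positive_op P L"
    and "\<delta> \<in> K_plus P"
    and "\<forall>x. T x \<in> Bset P d"
    and "\<forall>x y. \<exists>z. is_glb P ((\<lambda>z. d x z) ` T y) z"
    and "\<forall>x y. hausdorff_exists P d (T x) (T y)"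
    and "\<forall>x y. cle P (hausdorff P d (T x) (T y)) (\<delta> (d x y) + L (dist_set P d y (T x)))"
    and "condition_S P d T"
    and "(\<lambda>x. dist_set P d x (T x)) \<in> LS P d"
  shows "\<exists>x. x \<in> T x"
proof -
  note cone = assms(2)
  note ctr[trans] = cle_trans[OF cone]
  have dm: "\<And>x y. d x y = 0 \<longleftrightarrow> x = y" and dtri0: "\<And>x y z. cle P (d x y) (d x z + d y z)"
    using assms(5) unfolding cone_metric_def by auto
  have dsym: "d x y = d y x" for x y
  proof -
    have "cle P (d x y) (d y x)" using dtri0[of x y x] dm[of x x] by simp
    moreover have "cle P (d y x) (d x y)" using dtri0[of y x y] dm[of y y] by simp
    ultimately show ?thesis using cle_antisym cone by blast
  qed
  have dpos: "d x y \<in> P" for x y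
  proof -
    have "(2::real) *\<^sub>R d x y \<in> P" using dtri0[of x x y] dm[of x x] unfolding cle_def
      by (simp add: dsym[of y x] scaleR_2)
    from cone_scale[OF cone this, of "1/2"] show ?thesis by simp
  qed
  have tri: "cle P (d x y) (d x z + d z y)" for x y z
    using dtri0[of x y z] dsym[of y z] by simp
  obtain t where t: "0 \<le> t" "t < 1" "\<forall>x\<in>P. cle P 0 (\<delta> x) \<and> cle P (\<delta> x) (t *\<^sub>R x)"
    and dlin: "linear \<delta>" and dposop: "positive_op P \<delta>"
    using assms(9) unfolding K_plus_def by blast
  define \<epsilon> where "\<epsilon> = (1 - t) / 2"
  define s where "s = t * (1 + \<epsilon>)"
  have \<epsilon>pos: "\<epsilon> > 0" unfolding \<epsilon>_def using t by simp
  have s0: "0 \<le> s" unfolding s_def using t \<epsilon>pos by simp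
  have s1: "s < 1"
  proof -
    have "t * \<epsilon> \<le> \<epsilon>" using t \<epsilon>pos by (simp add: mult_left_le_one_le)
    then have "s \<le> t + \<epsilon>" unfolding s_def by (simp add: algebra_simps)
    then show ?thesis using t(1,2) unfolding \<epsilon>_def by (simp add: field_simps)
  qed
  obtain f where f: "\<forall>x. f x \<in> T x" "\<forall>x. cle P (d x (f x)) ((1 + \<epsilon>) *\<^sub>R dist_set P d x (T x))"
    using assms(14) \<epsilon>pos unfolding condition_S_def by blast
  define \<phi> where "\<phi> y = dist_set P d y (T y)" for y
  have glb: "is_glb P (d z ` T y) (dist_set P d z (T y))" for z y
  proof -
    obtain w where w: "is_glb P (d z ` T y) w" using assms(11) by blast
    then show ?thesis unfolding dist_set_def using cinf_eq[OF cone w] by simp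
  qed
  have distpos: "dist_set P d z (T y) \<in> P" for z y
    using glb[of z y] dpos unfolding is_glb_def cle_0[symmetric] by blast
  have dist_le: "a \<in> T w \<Longrightarrow> cle P (dist_set P d z (T w)) (d z a)" for a w z
    using glb[of z w] unfolding is_glb_def by blast
  have dist_self: "a \<in> T w \<Longrightarrow> dist_set P d a (T w) = 0" for a w
  proof -
    assume a: "a \<in> T w"
    have "is_glb P (d a ` T w) 0"
      unfolding is_glb_def using dpos dm[of a a] a by (auto simp: cle_0)
    then show ?thesis using glb_unique[OF cone glb] by blast
  qed
  have Hb: "a \<in> T x \<Longrightarrow> cle P (dist_set P d a (T y)) (hausdorff P d (T x) (T y))" for a x y
  proof -
    assume a: "a \<in> T x"
    obtain z1 z2 z3 where z1: "is_lub P ((\<lambda>x. dist_set P d x (T y)) ` T x) z1"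
      and z2: "is_lub P ((\<lambda>y. dist_set P d y (T x)) ` T y) z2"
      and z3: "is_lub P {csup P ((\<lambda>x. dist_set P d x (T y)) ` T x), csup P ((\<lambda>y. dist_set P d y (T x)) ` T y)} z3"
      using assms(12) unfolding hausdorff_exists_def by blast
    have h: "hausdorff P d (T x) (T y) = z3" unfolding hausdorff_def using csup_eq[OF cone z3] .
    have "cle P (dist_set P d a (T y)) z1" using z1 a unfolding is_lub_def by blast
    moreover have "cle P z1 z3" using z3 csup_eq[OF cone z1] unfolding is_lub_def by auto
    ultimately show ?thesis using h cle_trans[OF cone] by metis
  qed
  obtain x0 :: 'a where True by blast
  define x where "x n = (f ^^ n) x0" for n
  have xs: "x (Suc n) = f (x n)" for n unfolding x_def by simp
  define c0 where "c0 = \<phi> (x 0)"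
  have c0P: "c0 \<in> P" unfolding c0_def \<phi>_def using distpos .
  have step1: "cle P (d (x n) (x (Suc n))) ((1 + \<epsilon>) *\<^sub>R \<phi> (x n))" for n
    using f(2) xs \<phi>_def by simp
  have step2: "cle P (\<phi> (x (Suc n))) (s *\<^sub>R \<phi> (x n))" for n
  proof -
    have mem: "x (Suc n) \<in> T (x n)" using f(1) xs by simp
    have "cle P (\<phi> (x (Suc n))) (hausdorff P d (T (x n)) (T (x (Suc n))))"
      unfolding \<phi>_def using Hb[OF mem] .
    also have "cle P \<dots> (\<delta> (d (x n) (x (Suc n))) + L (dist_set P d (x (Suc n)) (T (x n))))"
      using assms(13) by blast
    also have "\<dots> = \<delta> (d (x n) (x (Suc n)))"
      using dist_self[OF mem] linear_0[OF assms(7)] by simp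
    also have "cle P \<dots> (\<delta> ((1 + \<epsilon>) *\<^sub>R \<phi> (x n)))"
      using pos_mono[OF dlin dposop step1] .
    also have "cle P \<dots> (t *\<^sub>R ((1 + \<epsilon>) *\<^sub>R \<phi> (x n)))"
    proof -
      have "(1 + \<epsilon>) *\<^sub>R \<phi> (x n) \<in> P" unfolding \<phi>_def
        using cone_scale[OF cone distpos, of "1+\<epsilon>"] \<epsilon>pos by simp
      then show ?thesis using t(3) by blast
    qed
    also have "\<dots> = s *\<^sub>R \<phi> (x n)" unfolding s_def by simp
    finally show ?thesis .
  qed
  have step3: "cle P (\<phi> (x n)) ((s ^ n) *\<^sub>R c0)" for n
  proof (induction n)
    case 0 show ?case unfolding c0_def using cle_refl[OF cone] by simp
  next
    case (Suc n)
    have "cle P (\<phi> (x (Suc n))) (s *\<^sub>R \<phi> (x n))" by (rule step2)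
    also have "cle P \<dots> (s *\<^sub>R ((s ^ n) *\<^sub>R c0))" using cle_scale[OF cone s0 Suc] .
    finally show ?case by simp
  qed
  have step4: "cle P (d (x n) (x (Suc n))) (((1 + \<epsilon>) * s ^ n) *\<^sub>R c0)" for n
  proof -
    have "cle P (d (x n) (x (Suc n))) ((1 + \<epsilon>) *\<^sub>R \<phi> (x n))" by (rule step1)
    also have "cle P \<dots> ((1 + \<epsilon>) *\<^sub>R ((s ^ n) *\<^sub>R c0))"
      using cle_scale[OF cone _ step3] \<epsilon>pos by simp
    finally show ?thesis by simp
  qed
  have step5: "cle P (d (x m) (x (m + k))) ((\<Sum>i<k. (1 + \<epsilon>) * s ^ (m + i)) *\<^sub>R c0)" for m k
  proof (induction k)
    case 0 show ?case using dm[of "x m" "x m"] cle_refl[OF cone] by simp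
  next
    case (Suc k)
    have "cle P (d (x m) (x (m + Suc k))) (d (x m) (x (m + k)) + d (x (m + k)) (x (Suc (m + k))))"
      using tri by simp
    also have "cle P \<dots> ((\<Sum>i<k. (1 + \<epsilon>) * s ^ (m + i)) *\<^sub>R c0 + ((1 + \<epsilon>) * s ^ (m + k)) *\<^sub>R c0)"
      using cle_add[OF cone Suc step4] .
    finally show ?case by (simp add: scaleR_add_left)
  qed
  define K where "K = (1 + \<epsilon>) / (1 - s)"
  have Kpos: "K > 0" unfolding K_def using \<epsilon>pos s1 by simp
  have sumle: "(\<Sum>i<k. (1 + \<epsilon>) * s ^ (m + i)) \<le> K * s ^ m" for m k
  proof -
    have "(\<Sum>i<k. (1 + \<epsilon>) * s ^ (m + i)) = (1 + \<epsilon>) * s ^ m * (\<Sum>i<k. s ^ i)"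
      by (simp add: sum_distrib_left power_add mult.assoc)
    also have "(\<Sum>i<k. s ^ i) = (1 - s ^ k) / (1 - s)" using sum_gp_strict[of s k] s1 by simp
    also have "(1 - s ^ k) / (1 - s) \<le> 1 / (1 - s)" using s0 s1 by (simp add: divide_right_mono)
    finally show ?thesis unfolding K_def using \<epsilon>pos s0
      by (simp add: mult_left_mono)
  qed
  have dbound: "N \<le> m \<Longrightarrow> N \<le> n \<Longrightarrow> cle P (d (x m) (x n)) ((K * s ^ N) *\<^sub>R c0)" for N m n
  proof -
    have aux: "N \<le> m \<Longrightarrow> m \<le> n \<Longrightarrow> cle P (d (x m) (x n)) ((K * s ^ N) *\<^sub>R c0)" for m n
    proof -
      assume a: "N \<le> m" "m \<le> n"
      have "cle P (d (x m) (x (m + (n - m)))) ((\<Sum>i<n-m. (1 + \<epsilon>) * s ^ (m + i)) *\<^sub>R c0)"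
        by (rule step5)
      also have "cle P \<dots> ((K * s ^ N) *\<^sub>R c0)"
      proof (rule cle_scalar[OF cone c0P])
        have "s ^ m \<le> s ^ N" using power_decreasing[OF a(1) s0] s1 by simp
        then have "K * s ^ m \<le> K * s ^ N" using Kpos by simp
        then show "(\<Sum>i<n-m. (1 + \<epsilon>) * s ^ (m + i)) \<le> K * s ^ N"
          using sumle[of m "n-m"] by linarith
      qed
      finally show ?thesis using a by simp
    qed
    assume "N \<le> m" "N \<le> n"
    then show ?thesis
    proof (cases "m \<le> n")
      case True then show ?thesis using aux[of m n] \<open>N \<le> m\<close> by blast
    next
      case False then show ?thesis using aux[of n m] \<open>N \<le> n\<close> dsym[of "x m" "x n"] by simp
    qed
  qed
  have cauchy: "ccauchy P d x"
    unfolding ccauchy_def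
  proof (intro allI impI)
    fix e assume e: "e \<in> interior P"
    obtain \<eta> where \<eta>: "\<eta> > 0" "\<forall>r. \<bar>r\<bar> < \<eta> \<longrightarrow> e + r *\<^sub>R c0 \<in> interior P"
      using small[OF assms(1) open_interior e] by blast
    obtain N where N: "s ^ N < \<eta> / K" using real_arch_pow_inv[of "\<eta>/K" s] \<eta> Kpos s1 by auto
    have "\<bar>- (K * s ^ N)\<bar> < \<eta>" using N Kpos s0 by (simp add: field_simps)
    then have i: "e - (K * s ^ N) *\<^sub>R c0 \<in> interior P" using \<eta>(2) by fastforce
    show "\<exists>N. \<forall>m\<ge>N. \<forall>n\<ge>N. cll P (d (x m) (x n)) e"
    proof (intro exI allI impI)
      fix m n assume "N \<le> m" "N \<le> n"
      then have "(K * s ^ N) *\<^sub>R c0 - d (x m) (x n) \<in> P" using dbound[of N m n] unfolding cle_def by simp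
      from interior_add[OF assms(1) cone i this]
      show "cll P (d (x m) (x n)) e" unfolding cll_def by simp
    qed
  qed
  obtain xs where conv: "cconv P d x xs" using assms(6) cauchy unfolding ccomplete_def by blast
  have lscP: "lsc P d \<phi>" using assms(15) unfolding LS_def \<phi>_def by auto
  have phiN: "cle P (\<phi> xs) ((s ^ N) *\<^sub>R c0)" for N
  proof -
    have cl: "cclosed P d {y. cle P (\<phi> y) ((s ^ N) *\<^sub>R c0)}" using lscP unfolding lsc_def by blast
    have "\<forall>n. x (n + N) \<in> {y. cle P (\<phi> y) ((s ^ N) *\<^sub>R c0)}"
    proof
      fix n
      have "s ^ (n + N) \<le> s ^ N" using power_decreasing[of N "n+N" s] s0 s1 by simp
      then have "cle P ((s ^ (n + N)) *\<^sub>R c0) ((s ^ N) *\<^sub>R c0)" by (rule cle_scalar[OF cone c0P])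
      then show "x (n + N) \<in> {y. cle P (\<phi> y) ((s ^ N) *\<^sub>R c0)}"
        using cle_trans[OF cone step3[of "n+N"]] by simp
    qed
    moreover have "cconv P d (\<lambda>n. x (n + N)) xs"
      using conv unfolding cconv_def by (meson le_add1 order_trans)
    ultimately show ?thesis using cl[unfolded cclosed_def, rule_format, of "\<lambda>n. x (n + N)" xs] by simp
  qed
  have phiP: "\<phi> xs \<in> P" unfolding \<phi>_def using distpos .
  have negP: "- \<phi> xs \<in> P"
  proof (rule ccontr)
    assume nP: "- \<phi> xs \<notin> P"
    have "open (- P)" using assms(2) unfolding is_cone_def by auto
    then obtain \<eta> where \<eta>: "\<eta> > 0" "\<forall>r. \<bar>r\<bar> < \<eta> \<longrightarrow> - \<phi> xs + r *\<^sub>R c0 \<in> - P"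
      using small[OF assms(1), of "- P" "- \<phi> xs"] nP by blast
    obtain N where N: "s ^ N < \<eta>" using real_arch_pow_inv[of \<eta> s] \<eta> s1 by auto
    have "- \<phi> xs + (s ^ N) *\<^sub>R c0 \<notin> P" using \<eta>(2) N s0 by auto
    moreover have "(s ^ N) *\<^sub>R c0 - \<phi> xs \<in> P" using phiN[of N] unfolding cle_def .
    ultimately show False by simp
  qed
  have phi0: "\<phi> xs = 0" using cone_antisym[OF cone phiP negP] .
  have "cle P (d xs (f xs)) 0" using f(2)[rule_format, of xs] phi0 unfolding \<phi>_def by simp
  moreover have "cle P 0 (d xs (f xs))" using dpos[of xs "f xs"] by (simp add: cle_0)
  ultimately have "d xs (f xs) = 0" using cle_antisym[OF cone] by blast
  then have "xs = f xs" using dm by simp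
  then show ?thesis using f(1) by metis
qed

end
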